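(* In the algebra $\mathcal{B}_d$, every monomial of the form $e^{(a)}\binom{H_1}{b}f^{(c)}$ (with $a,b,c\ge0$) of degree $a+b+c=d+1$ is expressible as a $\mathbb{Q}$-linear combination of monomials of the same form $e^{(a')}\binom{H_1}{b'}f^{(c')}$ of strictly smaller degree $a'+b'+c'$ and strictly smaller height $a'+c'$. The same holds for monomials of the form $f^{(a)}\binom{H_2}{b}e^{(c)}$ (expressed via monomials $f^{(a')}\binom{H_2}{b'}e^{(c')}$).
   Context: Fix an integer $d\ge 0$. $\mathcal{B}_d$ is the associative $\mathbb{Q}$-algebra with $1$ generated by $e,f,H_1,H_2$ subject to the relations $H_1H_2=H_2H_1$, $H_1e-eH_1=e$, $H_1f-fH_1=-f$, $H_2e-eH_2=-e$, $H_2f-fH_2=f$, $ef-fe=H_1-H_2$, $H_1+H_2=d$, and $H_1(H_1-1)\cdots(H_1-d)=0$. For an element $T$ and integer $m\ge 0$, $T^{(m)}=T^m/m!$ and $\binom{T}{m}=T(T-1)\cdots(T-m+1)/m!$. The monomial $e^{(a)}\binom{H_1}{b}f^{(c)}$ (resp. $f^{(a)}\binom{H_2}{b}e^{(c)}$) has degree $a+b+c$ and height $a+c$. *)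

theory Defs
  imports Complex_Main
begin

class qalgebra_1 = ring_1 +
  fixes qscale :: "rat \<Rightarrow> 'a \<Rightarrow> 'a"
  assumes qscale_add_right: "qscale r (x + y) = qscale r x + qscale r y"
    and qscale_add_left: "qscale (r + s) x = qscale r x + qscale s x"
    and qscale_mult: "qscale r (qscale s x) = qscale (r * s) x"
    and qscale_one: "qscale 1 x = x"
    and qscale_mult_left: "qscale r (x * y) = qscale r x * y"
    and qscale_mult_right: "qscale r (x * y) = x * qscale r y"

primrec ffact :: "'a::ring_1 \<Rightarrow> nat \<Rightarrow> 'a" where
  "ffact T 0 = 1"
| "ffact T (Suc m) = ffact T m * (T - of_nat m)"

definition dpow :: "'a::qalgebra_1 \<Rightarrow> nat \<Rightarrow> 'a" where
  "dpow T m = qscale (1 / of_nat (fact m)) (T ^ m)"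

definition binomA :: "'a::qalgebra_1 \<Rightarrow> nat \<Rightarrow> 'a" where
  "binomA T m = qscale (1 / of_nat (fact m)) (ffact T m)"

definition Bd_relations :: "nat \<Rightarrow> 'a::qalgebra_1 \<Rightarrow> 'a \<Rightarrow> 'a \<Rightarrow> 'a \<Rightarrow> bool" where
  "Bd_relations d e f H1 H2 \<longleftrightarrow>
     H1 * H2 = H2 * H1 \<and>
     H1 * e - e * H1 = e \<and>
     H1 * f - f * H1 = - f \<and>
     H2 * e - e * H2 = - e \<and>
     H2 * f - f * H2 = f \<and>
     e * f - f * e = H1 - H2 \<and>
     H1 + H2 = of_nat d \<and>
     ffact H1 (d + 1) = 0"

end

theory Submission
  imports Defs "HOL-Computational_Algebra.Polynomial"
begin

lemma qscale_zero_right[simp]: "qscale r (0::'a::qalgebra_1) = 0"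
  using qscale_add_right[of r "0::'a" 0] by simp

lemma qscale_zero_left[simp]: "qscale 0 (x::'a::qalgebra_1) = 0"
  using qscale_add_left[of 0 0 x] by simp

lemma qscale_minus_right: "qscale r (- (x::'a::qalgebra_1)) = - qscale r x"
  using qscale_add_right[of r x "-x"] by (simp add: minus_unique)

lemma qscale_minus_left: "qscale (- r) (x::'a::qalgebra_1) = - qscale r x"
  using qscale_add_left[of r "-r" x] by (simp add: minus_unique)

lemma qscale_diff_right: "qscale r ((x::'a::qalgebra_1) - y) = qscale r x - qscale r y"
  using qscale_add_right[of r x "-y"] by (simp add: qscale_minus_right)

lemma qscale_diff_left: "qscale (r - s) (x::'a::qalgebra_1) = qscale r x - qscale s x"
  using qscale_add_left[of r "-s" x] by (simp add: qscale_minus_left)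

lemma qscale_of_nat: "qscale (of_nat n) (x::'a::qalgebra_1) = of_nat n * x"
  by (induct n) (simp_all add: qscale_add_left qscale_one algebra_simps)

lemma qscale_mult_l: "qscale r (x::'a::qalgebra_1) * y = qscale r (x * y)"
  by (simp add: qscale_mult_left)

lemma qscale_mult_r: "(x::'a::qalgebra_1) * qscale r y = qscale r (x * y)"
  by (simp add: qscale_mult_right)

lemma qscale_sum: "qscale r (sum g A) = (\<Sum>i\<in>A. qscale r (g i :: 'a::qalgebra_1))"
  by (induct A rule: infinite_finite_induct) (simp_all add: qscale_add_right)

lemma qscale_qscale: "qscale r (qscale s (x::'a::qalgebra_1)) = qscale (r * s) x"
  by (rule qscale_mult)

definition ev :: "'a::qalgebra_1 \<Rightarrow> rat poly \<Rightarrow> 'a" where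
  "ev X p = foldr (\<lambda>a r. qscale a 1 + X * r) (coeffs p) 0"

lemma ev_0[simp]: "ev X 0 = 0"
  by (simp add: ev_def)

lemma ev_pCons: "ev X (pCons a p) = qscale a 1 + X * ev X p"
proof (cases "a = 0 \<and> p = 0")
  case True then show ?thesis by (simp add: ev_def)
next
  case False
  then have "coeffs (pCons a p) = a # coeffs p" by (auto simp: cCons_def)
  then show ?thesis by (simp add: ev_def)
qed

lemma ev_add: "ev X (p + q) = ev X p + ev X q"
proof (induct p arbitrary: q rule: pCons_induct)
  case 0 then show ?case by simp
next
  case (pCons a p)
  obtain b q' where q: "q = pCons b q'" by (cases q)
  have "ev X (p + q') = ev X p + ev X q'" by (rule pCons)
  then show ?case
    by (simp add: q ev_pCons qscale_add_left algebra_simps)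
qed

lemma ev_smult: "ev X (smult r p) = qscale r (ev X p)"
  by (induct p rule: pCons_induct)
     (simp_all add: ev_pCons qscale_add_right qscale_mult qscale_mult_r)

lemma ev_minus: "ev X (- p) = - ev X p"
  using ev_smult[of X "-1" p] by (simp add: qscale_minus_left qscale_one)

lemma ev_diff: "ev X (p - q) = ev X p - ev X q"
  using ev_add[of X p "-q"] by (simp add: ev_minus)

lemma ev_const: "ev X [:c:] = qscale c 1"
  by (simp add: ev_pCons)

lemma ev_1[simp]: "ev X 1 = 1"
  by (simp add: one_pCons ev_pCons qscale_one)

lemma ev_X: "ev X [:0, 1:] = X"
  by (simp add: ev_pCons qscale_one)

lemma ev_lin: "ev X [:c, 1:] = X + qscale c 1"
  by (simp add: ev_pCons qscale_one)

lemma ev_comm: "X * ev X p = ev X p * X"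
proof (induct p rule: pCons_induct)
  case 0 then show ?case by simp
next
  case (pCons a p)
  have "X * (ev X p * X) = ev X p * (X * X)" by (metis pCons mult.assoc)
  moreover have "X * (X * ev X p) = ev X p * (X * X)" by (metis pCons mult.assoc)
  ultimately show ?case
    by (simp add: ev_pCons algebra_simps qscale_mult_l qscale_mult_r)
qed

lemma ev_mult: "ev X (p * q) = ev X p * ev X q"
proof (induct p rule: pCons_induct)
  case 0 then show ?case by simp
next
  case (pCons a p)
  have "ev X (pCons a p * q) = qscale a (ev X q) + X * ev X (p * q)"
    by (simp add: ev_add ev_smult ev_pCons)
  also have "\<dots> = ev X (pCons a p) * ev X q"
    by (simp add: pCons ev_pCons algebra_simps qscale_mult_l mult.assoc)
  finally show ?case .
qed

lemma ev_comm2: "ev X p * ev X q = ev X q * ev X p"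
  by (metis ev_mult mult.commute)

lemma ev_sum: "ev X (sum g A) = (\<Sum>i\<in>A. ev X (g i))"
  by (induct A rule: infinite_finite_induct) (simp_all add: ev_add)

lemma ev_pcompose: "ev X (pcompose p q) = ev (ev X q) p"
  by (induct p rule: pCons_induct)
     (simp_all add: pcompose_pCons ev_pCons ev_add ev_mult ev_const)

lemma ev_eigen:
  assumes "X * Y = qscale mu Y"
  shows "ev X p * Y = qscale (poly p mu) Y"
proof (induct p rule: pCons_induct)
  case 0 then show ?case by simp
next
  case (pCons a p)
  have "ev X (pCons a p) * Y = qscale a Y + X * (ev X p * Y)"
    by (simp add: ev_pCons algebra_simps qscale_mult_l mult.assoc)
  also have "\<dots> = qscale (poly (pCons a p) mu) Y"
    by (simp add: pCons qscale_mult_r assms qscale_mult qscale_add_left mult.commute)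
  finally show ?case .
qed

lemma ev_shift:
  assumes "Y * X = (X + qscale s 1) * Y"
  shows "Y * ev X p = ev X (pcompose p [:s, 1:]) * Y"
proof (induct p rule: pCons_induct)
  case 0 then show ?case by (simp add: pcompose_0)
next
  case (pCons a p)
  have "Y * ev X (pCons a p) = qscale a Y + (Y * X) * ev X p"
    by (simp add: ev_pCons algebra_simps qscale_mult_l qscale_mult_r mult.assoc)
  also have "\<dots> = qscale a Y + (X + qscale s 1) * (Y * ev X p)"
    by (simp add: assms mult.assoc)
  also have "\<dots> = ev X (pcompose (pCons a p) [:s, 1:]) * Y"
    by (simp add: pCons pcompose_pCons ev_add ev_mult ev_const ev_lin algebra_simps ev_pCons ev_smult
         qscale_mult_l qscale_one mult.assoc)
  finally show ?case .
qed

lemma ev_shift_pow: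
  assumes "Y * X = (X + qscale s 1) * Y"
  shows "Y ^ n * X = (X + qscale (of_nat n * s) 1) * Y ^ n"
proof (induct n)
  case 0 then show ?case by simp
next
  case (Suc n)
  have "Y ^ Suc n * X = Y ^ n * (Y * X)" by (simp only: power_Suc2 mult.assoc)
  also have "\<dots> = (Y ^ n * X) * Y + Y ^ n * qscale s Y"
    by (simp add: assms algebra_simps qscale_mult_l mult.assoc)
  also have "\<dots> = (X + qscale (of_nat (Suc n) * s) 1) * Y ^ Suc n"
    by (simp add: Suc algebra_simps qscale_mult_l qscale_mult_r qscale_add_left
        power_Suc2 mult.assoc qscale_one power_commutes)
  finally show ?case .
qed


definition P :: "nat \<Rightarrow> rat poly" where
  "P n = (\<Prod>j<n. [:- of_nat j, 1:])"

lemma P_0[simp]: "P 0 = 1" by (simp add: P_def)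
lemma P_Suc: "P (Suc n) = P n * [:- of_nat n, 1:]"
  by (simp add: P_def)

lemma poly_P: "poly (P n) x = (\<Prod>j<n. x - of_nat j)"
  by (simp add: P_def poly_prod)

lemma P_nz: "P n \<noteq> 0"
  by (induct n) (simp_all add: P_Suc del: mult_pCons_right mult_pCons_left)

lemma degree_P: "degree (P n) = n"
  by (induct n) (simp_all add: P_Suc degree_mult_eq P_nz del: mult_pCons_right mult_pCons_left)

lemma coeff_P: "coeff (P n) n = 1"
proof -
  have "lead_coeff (P n) = 1"
    by (induct n) (simp_all add: P_Suc lead_coeff_mult del: mult_pCons_right mult_pCons_left)
  then show ?thesis by (simp add: degree_P)
qed

lemma ev_P: "ev X (P n) = ffact X n"
  by (induct n) (simp_all add: P_Suc ev_mult ev_lin qscale_minus_left qscale_of_nat del: mult_pCons_right mult_pCons_left)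

lemma binom_basis:
  "degree q \<le> n \<Longrightarrow> \<exists>al. q = (\<Sum>t\<le>n. smult (al t) (P t))"
proof (induct n arbitrary: q)
  case 0
  then have "q = [:coeff q 0:]" by (metis degree_0_id le_0_eq)
  then have "q = (\<Sum>t\<le>0. smult (coeff q 0) (P t))" by simp
  then show ?case by (intro exI[of _ "\<lambda>_. coeff q 0"])
next
  case (Suc n)
  define q' where "q' = q - smult (coeff q (Suc n)) (P (Suc n))"
  have "degree q' \<le> n"
  proof (rule degree_le, intro allI impI)
    fix i assume "n < i"
    show "coeff q' i = 0"
    proof (cases "i = Suc n")
      case True then show ?thesis by (simp add: q'_def coeff_P)
    next
      case False
      then have "Suc n < i" using \<open>n < i\<close> by simp
      then show ?thesis using Suc.prems
        by (simp add: q'_def coeff_eq_0 degree_P)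
    qed
  qed
  then obtain al where al: "q' = (\<Sum>t\<le>n. smult (al t) (P t))" using Suc.hyps by blast
  define be where "be = al(Suc n := coeff q (Suc n))"
  have "q = q' + smult (coeff q (Suc n)) (P (Suc n))" by (simp add: q'_def)
  also have "\<dots> = (\<Sum>t\<le>Suc n. smult (be t) (P t))"
    by (simp add: al be_def)
  finally show ?case by blast
qed

locale bd =
  fixes e f H :: "'a::qalgebra_1" and d :: nat
  assumes He: "H * e - e * H = e"
    and Hf: "H * f - f * H = - f"
    and ef: "e * f - f * e = H + H - of_nat d"
    and van: "ffact H (Suc d) = 0"
begin

lemma eH: "e * H = (H + qscale (-1) 1) * e"
  using He by (simp add: algebra_simps qscale_minus_left qscale_one)

lemma fH: "f * H = (H + qscale 1 1) * f"
  using Hf by (simp add: algebra_simps qscale_one)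

lemma epow_ev: "e ^ n * ev H p = ev H (pcompose p [:- of_nat n, 1:]) * e ^ n"
  using ev_shift[OF ev_shift_pow[OF eH, of n]] by simp

lemma fpow_ev: "f ^ n * ev H p = ev H (pcompose p [:of_nat n, 1:]) * f ^ n"
  using ev_shift[OF ev_shift_pow[OF fH, of n]] by simp

lemma e_ev: "e * ev H p = ev H (pcompose p [:- 1, 1:]) * e"
  using epow_ev[of 1] by simp

lemma ev_e: "ev H p * e = e * ev H (pcompose p [:1, 1:])"
proof -
  have "pcompose (pcompose p [:1, 1:]) [:- 1, 1:] = p"
    by (simp add: pcompose_pCons flip: pcompose_assoc)
  then show ?thesis using e_ev[of "pcompose p [:1, 1:]"] by simp
qed

lemma ev_fpow: "ev H p * f ^ n = f ^ n * ev H (pcompose p [:- of_nat n, 1:])"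
proof -
  have "pcompose (pcompose p [:- of_nat n, 1:]) [:of_nat n, 1:] = p"
    by (simp add: pcompose_pCons flip: pcompose_assoc)
  then show ?thesis using fpow_ev[of n "pcompose p [:- of_nat n, 1:]"] by simp
qed

lemma ev_Z: "ev H (P (Suc d)) = 0"
  unfolding ev_P by (rule van)

lemma out_of_range:
  assumes "H * Y = qscale mu Y" "\<forall>j\<le>d. mu \<noteq> of_nat j"
  shows "Y = 0"
proof -
  have "ev H (P (Suc d)) * Y = qscale (poly (P (Suc d)) mu) Y"
    by (rule ev_eigen[OF assms(1)])
  then have 0: "qscale (poly (P (Suc d)) mu) Y = 0" by (simp add: ev_Z)
  have nz: "poly (P (Suc d)) mu \<noteq> 0"
    using assms(2) by (auto simp: poly_P)
  have "Y = qscale (1 / poly (P (Suc d)) mu) (qscale (poly (P (Suc d)) mu) Y)"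
    using nz by (simp add: qscale_mult qscale_one)
  then show ?thesis using 0 by simp
qed

lemma eigen_e:
  assumes "H * Y = qscale mu Y"
  shows "H * (e * Y) = qscale (mu + 1) (e * Y)"
proof -
  have "H * e = e * H + e" using He by (simp add: algebra_simps)
  then have "H * (e * Y) = e * (H * Y) + e * Y" by (simp add: algebra_simps flip: mult.assoc)
  then show ?thesis by (simp add: assms qscale_mult_r qscale_add_left qscale_one)
qed

lemma eigen_f:
  assumes "H * Y = qscale mu Y"
  shows "H * (f * Y) = qscale (mu - 1) (f * Y)"
proof -
  have hf: "H * f = f * H - f" using Hf by (simp add: algebra_simps)
  have "H * (f * Y) = (H * f) * Y" by (simp add: mult.assoc)
  also have "\<dots> = f * (H * Y) - f * Y" by (simp add: hf left_diff_distrib mult.assoc)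
  finally have "H * (f * Y) = f * (H * Y) - f * Y" .
  then show ?thesis by (simp add: assms qscale_mult_r qscale_diff_left qscale_one)
qed

lemma eigen_epow:
  assumes "H * Y = qscale mu Y"
  shows "H * (e ^ n * Y) = qscale (mu + of_nat n) (e ^ n * Y)"
proof (induct n)
  case 0 then show ?case by (simp add: assms)
next
  case (Suc n)
  show ?case using eigen_e[OF Suc] by (simp add: mult.assoc add_ac)
qed

lemma eigen_fpow:
  assumes "H * Y = qscale mu Y"
  shows "H * (f ^ n * Y) = qscale (mu - of_nat n) (f ^ n * Y)"
proof (induct n)
  case 0 then show ?case by (simp add: assms)
next
  case (Suc n)
  show ?case using eigen_f[OF Suc] by (simp add: mult.assoc algebra_simps)
qed

definition K where "K = H + H - of_nat d"

lemma Kf: "K * f = f * (K - 1 - 1)"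
proof -
  have hf: "H * f = f * H - f" using Hf by (simp add: algebra_simps)
  have "K * f = H * f + H * f - of_nat d * f" by (simp add: K_def algebra_simps)
  also have "\<dots> = (f * H - f) + (f * H - f) - f * of_nat d" by (simp add: hf mult_of_nat_commute)
  also have "\<dots> = f * (K - 1 - 1)" by (simp add: K_def algebra_simps)
  finally show ?thesis .
qed

lemma comm_ef:
  "e * f ^ Suc j = f ^ Suc j * e + f ^ j * (of_nat (Suc j) * K - of_nat (Suc j * j))"
proof (induct j)
  case 0 then show ?case using ef by (simp add: K_def algebra_simps)
next
  case (Suc j)
  define c1 :: 'a where "c1 = of_nat (Suc j)"
  define c2 :: 'a where "c2 = of_nat (Suc j * j)"
  have ef': "e * f = f * e + K" using ef by (simp add: K_def algebra_simps)
  have "e * f ^ Suc (Suc j) = (e * f ^ Suc j) * f" by (metis power_Suc2 mult.assoc)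
  also have "\<dots> = f ^ Suc j * (e * f) + f ^ j * ((c1 * K - c2) * f)"
    by (simp only: Suc c1_def c2_def distrib_right mult.assoc)
  also have "(c1 * K - c2) * f = f * (c1 * (K - 1 - 1) - c2)"
  proof -
    have "(c1 * K - c2) * f = c1 * (K * f) - c2 * f" by (simp add: left_diff_distrib mult.assoc)
    also have "\<dots> = c1 * (f * (K - 1 - 1)) - f * c2"
      by (simp only: Kf c2_def mult_of_nat_commute[of "Suc j * j" f])
    also have "\<dots> = f * (c1 * (K - 1 - 1)) - f * c2"
      by (simp only: c1_def mult_of_nat_commute[of "Suc j" f] mult.assoc[symmetric])
    also have "\<dots> = f * (c1 * (K - 1 - 1) - c2)" by (simp only: right_diff_distrib)
    finally show ?thesis .
  qed
  also have "f ^ Suc j * (e * f) + f ^ j * (f * (c1 * (K - 1 - 1) - c2))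
      = f ^ Suc (Suc j) * e + f ^ Suc j * (K + (c1 * (K - 1 - 1) - c2))"
  proof -
    have 1: "f ^ Suc j * (e * f) = f ^ Suc (Suc j) * e + f ^ Suc j * K"
      by (simp only: ef' distrib_left mult.assoc[symmetric] power_Suc2[symmetric])
    have 2: "f ^ j * (f * (c1 * (K - 1 - 1) - c2)) = f ^ Suc j * (c1 * (K - 1 - 1) - c2)"
      by (simp only: mult.assoc[symmetric] power_Suc2[symmetric])
    show ?thesis by (simp only: 1 2 distrib_left add.assoc)
  qed
  also have "K + (c1 * (K - 1 - 1) - c2) = of_nat (Suc (Suc j)) * K - of_nat (Suc (Suc j) * Suc j)"
    by (simp add: c1_def c2_def algebra_simps mult_2_right)
  finally show ?case .
qed

definition Kp :: "rat poly" where "Kp = [:- of_nat d, 2:]"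

lemma qscale_two: "qscale 2 (x::'a) = x + x"
  using qscale_add_left[of 1 1 x] by (simp add: qscale_one)

lemma ev_Kp: "ev H Kp = K"
  by (simp add: qscale_two Kp_def K_def ev_pCons qscale_minus_left qscale_of_nat algebra_simps
      mult_of_nat_commute mult_2_right)

lemma comm_ef_ev:
  "e * f ^ Suc j = f ^ Suc j * e + f ^ j * ev H (smult (of_nat (Suc j)) Kp - [:of_nat (Suc j * j):])"
proof -
  have c: "\<And>m. ev H [:of_nat m:] = (of_nat m::'a)" by (simp add: ev_const qscale_of_nat)
  show ?thesis using comm_ef[of j] by (simp only: ev_diff ev_smult ev_Kp c qscale_of_nat)
qed

end


context bd
begin

definition Lnum :: "nat \<Rightarrow> rat poly" where
  "Lnum lam = (\<Prod>j\<in>{..d}-{lam}. [:- of_nat j, 1:])"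

definition L :: "nat \<Rightarrow> rat poly" where
  "L lam = smult (1 / poly (Lnum lam) (of_nat lam)) (Lnum lam)"

definition idem :: "nat \<Rightarrow> 'a" where
  "idem lam = ev H (L lam)"

lemma poly_Lnum: "poly (Lnum lam) x = (\<Prod>j\<in>{..d}-{lam}. x - of_nat j)"
  by (simp add: Lnum_def poly_prod)

lemma Lnum_nz: "poly (Lnum lam) (of_nat lam) \<noteq> 0"
  by (simp add: poly_Lnum)

lemma poly_L:
  assumes "mu \<le> d"
  shows "poly (L lam) (of_nat mu) = (if mu = lam then 1 else 0)"
proof (cases "mu = lam")
  case True then show ?thesis using Lnum_nz by (simp add: L_def)
next
  case False
  then have "poly (Lnum lam) (of_nat mu) = 0"
    using assms by (auto simp: poly_Lnum prod_zero_iff)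
  then show ?thesis using False by (simp add: L_def)
qed

lemma degree_L:
  assumes "lam \<le> d"
  shows "degree (L lam) \<le> d"
proof -
  have "degree (Lnum lam) \<le> sum (degree \<circ> (\<lambda>j. [:- of_nat j, 1::rat:])) ({..d}-{lam})"
    unfolding Lnum_def by (rule degree_prod_sum_le) simp
  also have "\<dots> = card ({..d}-{lam})" by simp
  also have "\<dots> = d" using assms by simp
  finally show ?thesis
    unfolding L_def using degree_smult_le order_trans by blast
qed

lemma sum_L: "(\<Sum>lam\<le>d. L lam) = 1"
proof (rule poly_eqI_degree[where A = "of_nat ` {..d}"])
  fix x :: rat assume "x \<in> of_nat ` {..d}"
  then obtain mu where mu: "mu \<le> d" "x = of_nat mu" by auto
  have "poly (\<Sum>lam\<le>d. L lam) x = (\<Sum>lam\<le>d. if mu = lam then 1 else 0)"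
    by (simp add: poly_sum mu poly_L)
  also have "\<dots> = 1" using mu by simp
  finally show "poly (\<Sum>lam\<le>d. L lam) x = poly 1 x" by simp
next
  have c: "card (of_nat ` {..d} :: rat set) = Suc d"
    by (simp add: card_image inj_on_def)
  show "degree (\<Sum>lam\<le>d. L lam) < card (of_nat ` {..d} :: rat set)"
    unfolding c using degree_L
    by (intro le_imp_less_Suc degree_sum_le) auto
  show "degree (1::rat poly) < card (of_nat ` {..d} :: rat set)" unfolding c by simp
qed

lemma sum_idem: "(\<Sum>lam\<le>d. idem lam) = 1"
  using arg_cong[OF sum_L, of "ev H"] by (simp add: idem_def ev_sum)

lemma idem_eigen:
  assumes "lam \<le> d"
  shows "H * idem lam = qscale (of_nat lam) (idem lam)"
proof -
  have "P (Suc d) = (\<Prod>j\<in>{..d}. [:- of_nat j, 1:])"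
    by (simp add: P_def lessThan_Suc_atMost)
  also have "\<dots> = [:- of_nat lam, 1:] * Lnum lam"
    unfolding Lnum_def using assms by (subst prod.remove[of _ lam]) auto
  finally have 1: "[:- of_nat lam, 1:] * L lam = smult (1 / poly (Lnum lam) (of_nat lam)) (P (Suc d))"
    by (simp add: L_def mult_smult_right)
  have "ev H ([:- of_nat lam, 1:] * L lam) = 0"
    unfolding 1 by (simp add: ev_smult ev_Z)
  then have "(H + qscale (- of_nat lam) 1) * idem lam = 0"
    by (simp add: ev_mult ev_lin idem_def del: mult_pCons_left mult_pCons_right)
  then have "(H - qscale (of_nat lam) 1) * idem lam = 0" by (simp add: qscale_minus_left)
  then have "H * idem lam - qscale (of_nat lam) 1 * idem lam = 0" by (simp only: left_diff_distrib)
  then show ?thesis by (simp add: qscale_mult_l)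
qed

lemma idem_absorb:
  assumes "lam \<le> d" "H * Y = qscale (of_nat lam) Y"
  shows "idem lam * Y = Y"
  using ev_eigen[OF assms(2), of "L lam"] assms(1) by (simp add: idem_def poly_L qscale_one)

inductive inU :: "nat \<Rightarrow> 'a \<Rightarrow> bool" for k where
  gen: "i + j < k \<Longrightarrow> inU k (e ^ i * ev H p * f ^ j)"
| zero: "inU k 0"
| add: "inU k x \<Longrightarrow> inU k y \<Longrightarrow> inU k (x + y)"
| scale: "inU k x \<Longrightarrow> inU k (qscale r x)"

lemma inU_mono: "inU k x \<Longrightarrow> k \<le> k' \<Longrightarrow> inU k' x"
  by (induct rule: inU.induct) (auto intro: inU.intros)

lemma inU_diff: "inU k x \<Longrightarrow> inU k y \<Longrightarrow> inU k (x - y)"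
  using inU.add[of k x "qscale (-1) y"] inU.scale[of k y "-1"]
  by (simp add: qscale_minus_left qscale_one)

lemma inU_sum: "(\<And>i. i \<in> A \<Longrightarrow> inU k (g i)) \<Longrightarrow> inU k (sum g A)"
  by (induct A rule: infinite_finite_induct) (auto intro: inU.intros)

lemma inU_mult_ev: "inU k x \<Longrightarrow> inU k (x * ev H q)"
proof (induct rule: inU.induct)
  case (gen i j p)
  have "e ^ i * ev H p * f ^ j * ev H q = e ^ i * ev H (p * pcompose q [:of_nat j, 1:]) * f ^ j"
    by (simp add: mult.assoc fpow_ev ev_mult)
  then show ?case using gen by (simp add: inU.gen)
next
  case zero then show ?case by (simp add: inU.zero)
next
  case (add x y) then show ?case by (simp add: distrib_right inU.add)
next
  case (scale x r) then show ?case by (simp add: qscale_mult_l inU.scale)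
qed

lemma inU_mult_e: "inU k x \<Longrightarrow> inU (Suc k) (x * e)"
proof (induct rule: inU.induct)
  case (gen i j p)
  show ?case
  proof (cases j)
    case 0
    have eq: "e ^ i * ev H p * f ^ j * e = e ^ Suc i * ev H (pcompose p [:1, 1:]) * f ^ 0"
      by (simp add: 0 mult.assoc ev_e power_Suc2 del: power_Suc)
    show ?thesis unfolding eq by (rule inU.gen) (use gen 0 in simp)
  next
    case (Suc j0)
    define r where "r = smult (of_nat (Suc j0)) Kp - [:of_nat (Suc j0 * j0):]"
    have fe: "f ^ Suc j0 * e = e * f ^ Suc j0 - f ^ j0 * ev H r"
      using comm_ef_ev[of j0] by (simp add: r_def algebra_simps)
    have "e ^ i * ev H p * f ^ j * e = e ^ i * ev H p * (f ^ Suc j0 * e)"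
      by (simp only: Suc mult.assoc)
    also have "\<dots> = e ^ i * (ev H p * e) * f ^ Suc j0 - e ^ i * ev H p * f ^ j0 * ev H r"
      by (simp only: fe right_diff_distrib mult.assoc)
    also have "\<dots> = e ^ Suc i * ev H (pcompose p [:1, 1:]) * f ^ Suc j0 - e ^ i * ev H p * f ^ j0 * ev H r"
      by (simp only: ev_e power_Suc2 mult.assoc)
    finally have "e ^ i * ev H p * f ^ j * e
        = e ^ Suc i * ev H (pcompose p [:1, 1:]) * f ^ Suc j0 - e ^ i * ev H p * f ^ j0 * ev H r" .
    moreover have "inU (Suc k) (e ^ Suc i * ev H (pcompose p [:1, 1:]) * f ^ Suc j0)"
      using gen Suc by (intro inU.gen) simp
    moreover have "inU (Suc k) (e ^ i * ev H p * f ^ j0 * ev H r)"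
      using gen Suc by (intro inU_mono[OF inU_mult_ev] inU.gen) auto
    ultimately show ?thesis by (simp add: inU_diff)
  qed
next
  case zero then show ?case by (simp add: inU.zero)
next
  case (add x y) then show ?case by (simp add: distrib_right inU.add)
next
  case (scale x r) then show ?case by (simp add: qscale_mult_l inU.scale)
qed

end


context bd
begin

lemma S_lemma:
  "lam \<le> d \<Longrightarrow> d < lam + a \<Longrightarrow> inU (a + c) (e ^ a * f ^ c * idem lam)"
proof (induct a arbitrary: c lam)
  case 0 then show ?case by simp
next
  case (Suc a)
  have eig: "H * idem lam = qscale (of_nat lam) (idem lam)" using Suc.prems(1) by (rule idem_eigen)
  show ?case
  proof (cases c)
    case 0
    have "e ^ Suc a * idem lam = 0"
    proof (rule out_of_range[OF eigen_epow[OF eig]])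
      show "\<forall>j\<le>d. of_nat lam + of_nat (Suc a) \<noteq> (of_nat j :: rat)"
      proof (intro allI impI)
        fix j assume "j \<le> d"
        then have "lam + Suc a \<noteq> j" using Suc.prems by simp
        then show "of_nat lam + of_nat (Suc a) \<noteq> (of_nat j :: rat)"
          by (simp only: of_nat_add[symmetric] of_nat_eq_iff simp_thms)
      qed
    qed
    then show ?thesis using 0 by (simp add: inU.zero)
  next
    case (Suc c0)
    define r where "r = smult (of_nat (Suc c0)) Kp - [:of_nat (Suc c0 * c0):]"
    have "e ^ Suc a * f ^ c * idem lam = e ^ a * (e * f ^ Suc c0) * idem lam"
      by (simp add: Suc mult.assoc power_Suc2 del: power_Suc)
    also have "\<dots> = e ^ a * f ^ Suc c0 * (e * idem lam) + e ^ a * ev H 1 * f ^ c0 * ev H (r * L lam)"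
    proof -
      have c: "e * f ^ Suc c0 = f ^ Suc c0 * e + f ^ c0 * ev H r"
        using comm_ef_ev[of c0] by (simp only: r_def)
      show ?thesis
        by (simp only: c distrib_left distrib_right mult.assoc ev_mult idem_def ev_1
            mult_1_left mult_1_right)
    qed
    finally have eq: "e ^ Suc a * f ^ c * idem lam
        = e ^ a * f ^ Suc c0 * (e * idem lam) + e ^ a * ev H 1 * f ^ c0 * ev H (r * L lam)" .
    have T2: "inU (Suc a + c) (e ^ a * ev H 1 * f ^ c0 * ev H (r * L lam))"
      by (rule inU_mult_ev, rule inU.gen) (simp add: Suc)
    have T1: "inU (Suc a + c) (e ^ a * f ^ Suc c0 * (e * idem lam))"
    proof (cases "lam = d")
      case True
      have "e * idem lam = 0"
      proof (rule out_of_range[OF eigen_e[OF eig]])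
        show "\<forall>j\<le>d. of_nat lam + 1 \<noteq> (of_nat j :: rat)"
        proof (intro allI impI)
          fix j assume "j \<le> d"
          then have "Suc lam \<noteq> j" using True by simp
          then show "of_nat lam + 1 \<noteq> (of_nat j :: rat)"
            by (simp only: of_nat_Suc[symmetric] of_nat_eq_iff simp_thms)
        qed
      qed
      then show ?thesis by (simp add: inU.zero)
    next
      case False
      then have le: "Suc lam \<le> d" using Suc.prems by simp
      have "H * (e * idem lam) = qscale (of_nat (Suc lam)) (e * idem lam)"
        using eigen_e[OF eig] by (simp add: add.commute)
      then have ab: "idem (Suc lam) * (e * idem lam) = e * idem lam"
        by (rule idem_absorb[OF le])
      have IH: "inU (a + Suc c0) (e ^ a * f ^ Suc c0 * idem (Suc lam))"
        using Suc.hyps[of "Suc lam" "Suc c0"] le Suc.prems by simp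
      have "inU (Suc (a + Suc c0)) (e ^ a * f ^ Suc c0 * idem (Suc lam) * e * ev H (L lam))"
        by (rule inU_mult_ev, rule inU_mult_e, rule IH)
      moreover have "e ^ a * f ^ Suc c0 * idem (Suc lam) * e * ev H (L lam)
          = e ^ a * f ^ Suc c0 * (e * idem lam)"
        using ab by (simp add: mult.assoc idem_def)
      ultimately show ?thesis using \<open>c = Suc c0\<close> by simp
    qed
    show ?thesis unfolding eq by (rule inU.add[OF T1 T2])
  qed
qed

lemma main_U:
  assumes "a + b + c = Suc d"
  shows "inU (a + c) (e ^ a * ffact H b * f ^ c)"
proof -
  let ?X = "e ^ a * ffact H b * f ^ c"
  have "?X = ?X * (\<Sum>lam\<le>d. idem lam)" by (simp add: sum_idem)
  also have "\<dots> = (\<Sum>lam\<le>d. ?X * idem lam)" by (rule sum_distrib_left)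
  finally have eq: "?X = (\<Sum>lam\<le>d. ?X * idem lam)" .
  have "inU (a + c) (?X * idem lam)" if lam: "lam \<le> d" for lam
  proof -
    have eigW: "H * (f ^ c * idem lam) = qscale (of_nat lam - of_nat c) (f ^ c * idem lam)"
      using eigen_fpow[OF idem_eigen[OF lam]] by simp
    have XW: "?X * idem lam = e ^ a * (ev H (P b) * (f ^ c * idem lam))"
      by (simp add: ev_P mult.assoc)
    show ?thesis
    proof (cases "lam < c")
      case True
      have "f ^ c * idem lam = 0"
      proof (rule out_of_range[OF eigW])
        show "\<forall>j\<le>d. of_nat lam - of_nat c \<noteq> (of_nat j :: rat)"
        proof (intro allI impI)
          fix j :: nat
          have "(of_nat lam :: rat) < of_nat c" using True by simp
          then show "of_nat lam - of_nat c \<noteq> (of_nat j :: rat)"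
            using of_nat_0_le_iff[of j] by linarith
        qed
      qed
      then show ?thesis using XW by (simp add: inU.zero)
    next
      case False
      then have cl: "(of_nat lam - of_nat c :: rat) = of_nat (lam - c)" by simp
      have PW: "ev H (P b) * (f ^ c * idem lam)
          = qscale (poly (P b) (of_nat (lam - c))) (f ^ c * idem lam)"
        using ev_eigen[OF eigW[unfolded cl], of "P b"] .
      show ?thesis
      proof (cases "lam < b + c")
        case True
        have "poly (P b) (of_nat (lam - c)) = 0"
          unfolding poly_P using True False
          by (auto simp: prod_zero_iff intro!: bexI[of _ "lam - c"])
        then show ?thesis using XW PW by (simp add: inU.zero)
      next
        case False
        then have "d < lam + a" using assms by simp
        then have "inU (a + c) (e ^ a * f ^ c * idem lam)" by (rule S_lemma[OF lam])
        then have "inU (a + c) (qscale (poly (P b) (of_nat (lam - c))) (e ^ a * f ^ c * idem lam))"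
          by (rule inU.scale)
        then show ?thesis using XW PW by (simp add: qscale_mult_r mult.assoc)
      qed
    qed
  qed
  then show ?thesis by (subst eq, intro inU_sum) auto
qed

end


context bd
begin

definition M :: "nat \<Rightarrow> nat \<Rightarrow> nat \<Rightarrow> 'a" where
  "M i t j = dpow e i * binomA H t * dpow f j"

lemma M_eq: "M i t j = qscale (1 / (of_nat (fact i) * of_nat (fact t) * of_nat (fact j)))
    (e ^ i * ev H (P t) * f ^ j)"
  by (simp add: M_def dpow_def binomA_def ev_P qscale_mult_l qscale_mult_r qscale_mult mult.assoc
      mult.commute mult.left_commute)

lemma M_eq': "e ^ i * ev H (P t) * f ^ j
    = qscale (of_nat (fact i) * of_nat (fact t) * of_nat (fact j)) (M i t j)"
  by (simp add: M_eq qscale_mult qscale_one)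

inductive inV :: "nat \<Rightarrow> 'a \<Rightarrow> bool" for k where
  gen: "i + t + j \<le> d \<Longrightarrow> i + j < k \<Longrightarrow> inV k (M i t j)"
| zero: "inV k 0"
| add: "inV k x \<Longrightarrow> inV k y \<Longrightarrow> inV k (x + y)"
| scale: "inV k x \<Longrightarrow> inV k (qscale r x)"

lemma inV_mono: "inV k x \<Longrightarrow> k \<le> k' \<Longrightarrow> inV k' x"
  by (induct rule: inV.induct) (auto intro: inV.intros)

lemma inV_sum: "(\<And>i. i \<in> A \<Longrightarrow> inV k (g i)) \<Longrightarrow> inV k (sum g A)"
  by (induct A rule: infinite_finite_induct) (auto intro: inV.intros)

lemma M_inU: "i + j < k \<Longrightarrow> inU k (M i t j)"
  unfolding M_eq by (intro inU.scale inU.gen)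

lemma V_U: "inV k x \<Longrightarrow> inU k x"
  by (induct rule: inV.induct) (auto intro: inU.intros M_inU)

definition R :: "nat \<Rightarrow> bool" where "R k \<longleftrightarrow> (\<forall>x. inU k x \<longrightarrow> inV k x)"
definition G :: "nat \<Rightarrow> bool" where
  "G k \<longleftrightarrow> (\<forall>a b c. a + c = k \<longrightarrow> a + b + c = Suc d \<longrightarrow> inV k (M a b c))"

lemma G_of_R:
  assumes "R k" shows "G k"
  unfolding G_def
proof (intro allI impI)
  fix a b c assume k: "a + c = k" and s: "a + b + c = Suc d"
  have "inU k (e ^ a * ev H (P b) * f ^ c)" using main_U[OF s] k by (simp add: ev_P)
  then have "inU k (M a b c)" unfolding M_eq by (rule inU.scale)
  then show "inV k (M a b c)" using assms by (simp add: R_def)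
qed

lemma R_0: "R 0"
  unfolding R_def
proof (intro allI impI)
  fix x assume "inU 0 x" then show "inV 0 x"
    by (induct rule: inU.induct) (auto intro: inV.intros)
qed

lemma R_Suc:
  assumes kd: "k \<le> d" and Rk: "R k" and Gk: "G k"
  shows "R (Suc k)"
  unfolding R_def
proof (intro allI impI)
  fix x assume "inU (Suc k) x"
  then show "inV (Suc k) x"
  proof (induct rule: inU.induct)
    case (gen i j p)
    show ?case
    proof (cases "i + j < k")
      case True
      then have "inU k (e ^ i * ev H p * f ^ j)" by (rule inU.gen)
      then have "inV k (e ^ i * ev H p * f ^ j)" using Rk by (simp add: R_def)
      then show ?thesis by (rule inV_mono) simp
    next
      case False
      then have ij: "i + j = k" using gen by simp
      define n0 where "n0 = Suc d - k"
      have n0: "n0 \<ge> 1" "i + n0 + j = Suc d" using kd ij by (auto simp: n0_def)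
      define s where "s = p div P n0"
      define q where "q = p mod P n0"
      have p: "p = s * P n0 + q" by (simp add: s_def q_def)
      have "q = 0 \<or> degree q < degree (P n0)" unfolding q_def by (rule degree_mod_less[OF P_nz])
      then have "degree q \<le> n0 - 1" using n0 by (auto simp: degree_P)
      then obtain al where al: "q = (\<Sum>t\<le>n0 - 1. smult (al t) (P t))"
        using binom_basis by blast
      have "e ^ i * ev H p * f ^ j
          = e ^ i * ev H (P n0) * f ^ j * ev H (pcompose s [:- of_nat j, 1:])
            + e ^ i * ev H q * f ^ j"
      proof -
        have 1: "ev H p = ev H (P n0) * ev H s + ev H q"
          by (simp add: p ev_add ev_mult ev_comm2[of H s])
        have 2: "ev H s * f ^ j = f ^ j * ev H (pcompose s [:- of_nat j, 1:])" by (rule ev_fpow)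
        show ?thesis
          by (simp only: 1 2 distrib_left distrib_right mult.assoc)
      qed
      moreover have "inV (Suc k) (e ^ i * ev H (P n0) * f ^ j * ev H (pcompose s [:- of_nat j, 1:]))"
      proof -
        have "inV k (M i n0 j)" using Gk ij n0 by (simp add: G_def)
        then have "inU k (M i n0 j)" by (rule V_U)
        then have "inU k (qscale (of_nat (fact i) * of_nat (fact n0) * of_nat (fact j)) (M i n0 j)
            * ev H (pcompose s [:- of_nat j, 1:]))"
          by (intro inU_mult_ev inU.scale)
        then have "inV k (e ^ i * ev H (P n0) * f ^ j * ev H (pcompose s [:- of_nat j, 1:]))"
          using Rk by (simp add: R_def M_eq')
        then show ?thesis by (rule inV_mono) simp
      qed
      moreover have "inV (Suc k) (e ^ i * ev H q * f ^ j)"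
      proof -
        have "e ^ i * ev H q * f ^ j = (\<Sum>t\<le>n0 - 1. qscale (al t) (e ^ i * ev H (P t) * f ^ j))"
          by (simp add: al ev_sum ev_smult sum_distrib_left sum_distrib_right qscale_mult_l
              qscale_mult_r mult.assoc)
        moreover have "inV (Suc k) (qscale (al t) (e ^ i * ev H (P t) * f ^ j))" if "t \<le> n0 - 1" for t
        proof -
          have "inV (Suc k) (M i t j)" using that n0 ij by (intro inV.gen) auto
          then show ?thesis unfolding M_eq' by (intro inV.scale)
        qed
        ultimately show ?thesis by (auto intro: inV_sum)
      qed
      ultimately show ?thesis by (simp add: inV.add)
    qed
  next
    case zero then show ?case by (rule inV.zero)
  next
    case (add x y) then show ?case by (blast intro: inV.add)
  next
    case (scale x r) then show ?case by (blast intro: inV.scale)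
  qed
qed

lemma R_all: "k \<le> Suc d \<Longrightarrow> R k"
proof (induct k)
  case 0 show ?case by (rule R_0)
next
  case (Suc k)
  then have "R k" by simp
  then show ?case using Suc.prems by (intro R_Suc G_of_R) auto
qed

lemma inV_main: "a + b + c = Suc d \<Longrightarrow> inV (a + c) (M a b c)"
  using G_of_R[OF R_all[of "a + c"]] by (simp add: G_def)

definition SS :: "nat \<Rightarrow> (nat \<times> nat \<times> nat) set" where
  "SS k = {(i, t, j). i + t + j < Suc d \<and> i + j < k}"

lemma finite_SS: "finite (SS k)"
proof (rule finite_subset)
  show "SS k \<subseteq> {..d} \<times> {..d} \<times> {..d}" by (auto simp: SS_def)
qed simp

lemma inV_repr:
  "inV k x \<Longrightarrow> \<exists>coef. x = (\<Sum>(i, t, j)\<in>SS k. qscale (coef (i, t, j)) (M i t j))"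
proof (induct rule: inV.induct)
  case (gen i t j)
  let ?c = "\<lambda>y. if y = (i, t, j) then 1 else (0::rat)"
  have mem: "(i, t, j) \<in> SS k" using gen by (auto simp: SS_def)
  have "(\<Sum>(i', t', j')\<in>SS k. qscale (?c (i', t', j')) (M i' t' j'))
      = (\<Sum>y\<in>SS k. if y = (i, t, j) then M i t j else 0)"
    by (rule sum.cong) (auto simp: qscale_one split: if_splits)
  also have "\<dots> = M i t j" using mem finite_SS by simp
  finally show ?case by (intro exI[of _ ?c]) simp
next
  case zero
  show ?case by (intro exI[of _ "\<lambda>_. 0"]) (simp add: case_prod_beta)
next
  case (add x y)
  then obtain c1 c2 where c1: "x = (\<Sum>(i, t, j)\<in>SS k. qscale (c1 (i, t, j)) (M i t j))"
    and c2: "y = (\<Sum>(i, t, j)\<in>SS k. qscale (c2 (i, t, j)) (M i t j))" by blast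
  have "x + y = (\<Sum>(i, t, j)\<in>SS k. qscale ((\<lambda>z. c1 z + c2 z) (i, t, j)) (M i t j))"
    unfolding c1 c2 sum.distrib[symmetric]
    by (rule sum.cong) (auto simp: qscale_add_left)
  then show ?case by (rule exI[of _ "\<lambda>z. c1 z + c2 z", OF HOL.subst[OF refl]])
next
  case (scale x r)
  then obtain c1 where c1: "x = (\<Sum>(i, t, j)\<in>SS k. qscale (c1 (i, t, j)) (M i t j))" by blast
  have "qscale r x = (\<Sum>(i, t, j)\<in>SS k. qscale ((\<lambda>z. r * c1 z) (i, t, j)) (M i t j))"
    unfolding c1 qscale_sum
    by (rule sum.cong) (auto simp: qscale_mult)
  then show ?case by (rule exI[of _ "\<lambda>z. r * c1 z", OF HOL.subst[OF refl]])
qed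

lemma ffact_ev: "ffact (ev H q) n = ev H (\<Prod>j<n. q - [:of_nat j:])"
  by (induct n) (simp_all add: ev_mult ev_diff ev_const qscale_of_nat)

lemma van_dual: "ffact (of_nat d - H) (Suc d) = 0"
proof -
  have 1: "of_nat d - H = ev H [:of_nat d, -1:]"
    by (simp add: ev_pCons qscale_of_nat qscale_minus_left qscale_one)
  have 2: "(\<Prod>j<Suc d. [:of_nat d, -1:] - [:of_nat j:]) = smult ((-1) ^ Suc d) (P (Suc d))"
  proof (rule poly_eq_poly_eq_iff[THEN iffD1], rule ext)
    fix x :: rat
    have "poly (\<Prod>j<Suc d. [:of_nat d, -1:] - [:of_nat j:]) x = (\<Prod>j<Suc d. - (x - of_nat (d - j)))"
      unfolding poly_prod by (rule prod.cong) (auto simp: of_nat_diff)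
    also have "\<dots> = (-1) ^ Suc d * (\<Prod>j<Suc d. x - of_nat (d - j))"
      by (simp only: prod_uminus card_lessThan)
    also have "(\<Prod>j<Suc d. x - of_nat (d - j)) = (\<Prod>j<Suc d. x - of_nat j)"
      using prod.nat_diff_reindex[of "\<lambda>j. x - of_nat j" "Suc d"] unfolding diff_Suc_Suc .
    finally show "poly (\<Prod>j<Suc d. [:of_nat d, -1:] - [:of_nat j:]) x
        = poly (smult ((-1) ^ Suc d) (P (Suc d))) x"
      by (simp add: poly_P)
  qed
  show ?thesis unfolding 1 ffact_ev 2 ev_smult ev_Z by simp
qed

end


lemma half:
  fixes e f H :: "'a::qalgebra_1"
  assumes "bd e f H d"
  shows "\<forall>a b c. a + b + c = d + 1 \<longrightarrow>
           (\<exists>coef :: nat \<times> nat \<times> nat \<Rightarrow> rat.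
              dpow e a * binomA H b * dpow f c =
              (\<Sum>(a', b', c') \<in> {(a', b', c'). a' + b' + c' < a + b + c \<and> a' + c' < a + c}.
                 qscale (coef (a', b', c')) (dpow e a' * binomA H b' * dpow f c')))"
proof (intro allI impI)
  interpret bd e f H d by (rule assms)
  fix a b c assume s: "a + b + c = d + 1"
  then have "inV (a + c) (M a b c)" by (intro inV_main) simp
  then obtain coef where "M a b c = (\<Sum>(i, t, j)\<in>SS (a + c). qscale (coef (i, t, j)) (M i t j))"
    using inV_repr by blast
  moreover have "SS (a + c) = {(a', b', c'). a' + b' + c' < a + b + c \<and> a' + c' < a + c}"
    using s by (simp add: SS_def)
  ultimately show "\<exists>coef :: nat \<times> nat \<times> nat \<Rightarrow> rat.
              dpow e a * binomA H b * dpow f c =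
              (\<Sum>(a', b', c') \<in> {(a', b', c'). a' + b' + c' < a + b + c \<and> a' + c' < a + c}.
                 qscale (coef (a', b', c')) (dpow e a' * binomA H b' * dpow f c'))"
    by (auto simp: M_def)
qed

theorem theorem4p5:
  fixes e f H1 H2 :: "'a::qalgebra_1" and d :: nat
  assumes "Bd_relations d e f H1 H2"
  shows "\<forall>a b c. a + b + c = d + 1 \<longrightarrow>
           (\<exists>coef :: nat \<times> nat \<times> nat \<Rightarrow> rat.
              dpow e a * binomA H1 b * dpow f c =
              (\<Sum>(a', b', c') \<in> {(a', b', c'). a' + b' + c' < a + b + c \<and> a' + c' < a + c}.
                 qscale (coef (a', b', c')) (dpow e a' * binomA H1 b' * dpow f c'))) \<and>
         (\<forall>a b c. a + b + c = d + 1 \<longrightarrow>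
           (\<exists>coef :: nat \<times> nat \<times> nat \<Rightarrow> rat.
              dpow f a * binomA H2 b * dpow e c =
              (\<Sum>(a', b', c') \<in> {(a', b', c'). a' + b' + c' < a + b + c \<and> a' + c' < a + c}.
                 qscale (coef (a', b', c')) (dpow f a' * binomA H2 b' * dpow e c'))))"
proof -
  from assms have r: "H1 * H2 = H2 * H1" "H1 * e - e * H1 = e" "H1 * f - f * H1 = - f"
    "H2 * e - e * H2 = - e" "H2 * f - f * H2 = f" "e * f - f * e = H1 - H2"
    "H1 + H2 = of_nat d" "ffact H1 (d + 1) = 0"
    by (simp_all add: Bd_relations_def)
  have H2: "H2 = of_nat d - H1" using r(7) by (simp add: algebra_simps flip: r(7))
  have b1: "bd e f H1 d"
    by unfold_locales (use r H2 in \<open>simp_all add: algebra_simps\<close>)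
  have v2: "ffact H2 (Suc d) = 0"
    unfolding H2 by (rule bd.van_dual[OF b1])
  have b2: "bd f e H2 d"
  proof unfold_locales
    show "H2 * f - f * H2 = f" by (rule r(5))
    show "H2 * e - e * H2 = - e" by (rule r(4))
    show "f * e - e * f = H2 + H2 - of_nat d"
    proof -
      have H1: "H1 = of_nat d - H2" using r(7) by (metis add_diff_cancel_right')
      have "f * e - e * f = - (e * f - f * e)" by simp
      also have "\<dots> = H2 - H1" using r(6) by simp
      also have "\<dots> = H2 + H2 - of_nat d" by (simp add: H1 algebra_simps)
      finally show ?thesis .
    qed
    show "ffact H2 (Suc d) = 0" by (rule v2)
  qed
  show ?thesis using half[OF b1] half[OF b2] by blast
qed

end
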